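(* Let $k$ be a positive integer, let $G$ be a connected graph of order at least $2$ with diameter $\mathrm{diam}(G)<k$, and let $H$ be a connected adjacency $k$-resolved graph of order $n_2$. Then $\mathrm{ldim}_f(G\boxtimes H)\leq n_2\cdot \mathrm{ldim}_f(G)$.
   Context: All graphs are finite, simple and connected; $d$ is the shortest-path distance. For an edge $uv$ of a graph $X$, $L_X(uv)=\{x\in V(X): d_X(u,x)\neq d_X(v,x)\}$. A function $f:V(X)\to[0,1]$ is a local resolving function of $X$ if $\sum_{x\in L_X(uv)}f(x)\geq 1$ for every edge $uv$; $\mathrm{ldim}_f(X)$ is the minimum of $\sum_{v}f(v)$ over all local resolving functions. For vertices $x,y$, the interval $I[x,y]$ is the set of vertices lying on some shortest $x$–$y$ path. A graph $H$ is adjacency $k$-resolved if for every two adjacent vertices $x,y$ there is $w\in V(H)$ such that ($d_H(y,w)\geq k$ and $x\in I[y,w]$) or ($d_H(x,w)\geq k$ and $y\in I[x,w]$). The strong product $G\boxtimes H$ has vertex set $V(G)\times V(H)$, and distinct $(u_1,v_1),(u_2,v_2)$ are adjacent iff ($u_1u_2\in E(G)$ or $u_1=u_2$) and ($v_1v_2\in E(H)$ or $v_1=v_2$). *)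

theory Defs
  imports Complex_Main
begin

definition graph :: "'a set \<Rightarrow> ('a \<Rightarrow> 'a \<Rightarrow> bool) \<Rightarrow> bool" where
  "graph V E \<longleftrightarrow> finite V \<and> V \<noteq> {} \<and>
     (\<forall>x y. E x y \<longrightarrow> x \<in> V \<and> y \<in> V) \<and>
     (\<forall>x. \<not> E x x) \<and> (\<forall>x y. E x y \<longrightarrow> E y x)"

definition walk :: "'a set \<Rightarrow> ('a \<Rightarrow> 'a \<Rightarrow> bool) \<Rightarrow> 'a list \<Rightarrow> bool" where
  "walk V E xs \<longleftrightarrow> xs \<noteq> [] \<and> set xs \<subseteq> V \<and> successively E xs"

definition walk_between :: "'a set \<Rightarrow> ('a \<Rightarrow> 'a \<Rightarrow> bool) \<Rightarrow> 'a \<Rightarrow> 'a \<Rightarrow> 'a list \<Rightarrow> bool" where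
  "walk_between V E x y xs \<longleftrightarrow> walk V E xs \<and> hd xs = x \<and> last xs = y"

definition connected_graph :: "'a set \<Rightarrow> ('a \<Rightarrow> 'a \<Rightarrow> bool) \<Rightarrow> bool" where
  "connected_graph V E \<longleftrightarrow> graph V E \<and>
     (\<forall>x\<in>V. \<forall>y\<in>V. \<exists>xs. walk_between V E x y xs)"

definition gdist :: "'a set \<Rightarrow> ('a \<Rightarrow> 'a \<Rightarrow> bool) \<Rightarrow> 'a \<Rightarrow> 'a \<Rightarrow> nat" where
  "gdist V E x y = (LEAST n. \<exists>xs. walk_between V E x y xs \<and> length xs = n + 1)"

definition diam :: "'a set \<Rightarrow> ('a \<Rightarrow> 'a \<Rightarrow> bool) \<Rightarrow> nat" where
  "diam V E = Max {gdist V E x y | x y. x \<in> V \<and> y \<in> V}"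

definition interval :: "'a set \<Rightarrow> ('a \<Rightarrow> 'a \<Rightarrow> bool) \<Rightarrow> 'a \<Rightarrow> 'a \<Rightarrow> 'a set" where
  "interval V E x y = {z. \<exists>xs. walk_between V E x y xs \<and>
       length xs = gdist V E x y + 1 \<and> z \<in> set xs}"

definition resolving_set_edge :: "'a set \<Rightarrow> ('a \<Rightarrow> 'a \<Rightarrow> bool) \<Rightarrow> 'a \<Rightarrow> 'a \<Rightarrow> 'a set" where
  "resolving_set_edge V E u v = {x\<in>V. gdist V E u x \<noteq> gdist V E v x}"

definition local_resolving_function ::
  "'a set \<Rightarrow> ('a \<Rightarrow> 'a \<Rightarrow> bool) \<Rightarrow> ('a \<Rightarrow> real) \<Rightarrow> bool" where
  "local_resolving_function V E f \<longleftrightarrow>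
     (\<forall>v\<in>V. 0 \<le> f v \<and> f v \<le> 1) \<and>
     (\<forall>u v. E u v \<longrightarrow> (\<Sum>x\<in>resolving_set_edge V E u v. f x) \<ge> 1)"

definition ldim_f :: "'a set \<Rightarrow> ('a \<Rightarrow> 'a \<Rightarrow> bool) \<Rightarrow> real" where
  "ldim_f V E = Inf {(\<Sum>v\<in>V. f v) | f. local_resolving_function V E f}"

definition adjacency_k_resolved :: "nat \<Rightarrow> 'a set \<Rightarrow> ('a \<Rightarrow> 'a \<Rightarrow> bool) \<Rightarrow> bool" where
  "adjacency_k_resolved k V E \<longleftrightarrow>
     (\<forall>x y. E x y \<longrightarrow> (\<exists>w\<in>V.
        (gdist V E y w \<ge> k \<and> x \<in> interval V E y w) \<or>
        (gdist V E x w \<ge> k \<and> y \<in> interval V E x w)))"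

definition strong_product_edges ::
  "'a set \<Rightarrow> 'b set \<Rightarrow> ('a \<Rightarrow> 'a \<Rightarrow> bool) \<Rightarrow> ('b \<Rightarrow> 'b \<Rightarrow> bool) \<Rightarrow> ('a \<times> 'b) \<Rightarrow> ('a \<times> 'b) \<Rightarrow> bool" where
  "strong_product_edges V1 V2 E1 E2 p q \<longleftrightarrow> p \<in> V1 \<times> V2 \<and> q \<in> V1 \<times> V2 \<and> p \<noteq> q \<and>
     (E1 (fst p) (fst q) \<or> fst p = fst q) \<and> (E2 (snd p) (snd q) \<or> snd p = snd q)"

end

theory Submission
  imports Defs
begin

definition lwalk :: "'a set \<Rightarrow> ('a \<Rightarrow> 'a \<Rightarrow> bool) \<Rightarrow> 'a list \<Rightarrow> bool" where
  "lwalk V E xs \<longleftrightarrow> xs \<noteq> [] \<and> set xs \<subseteq> V \<and> successively (\<lambda>a b. E a b \<or> a = b) xs"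

lemma lwalk_to_walk:
  assumes "lwalk V E xs"
  shows "\<exists>ys. walk_between V E (hd xs) (last xs) ys \<and> length ys \<le> length xs"
  using assms
proof (induction xs)
  case Nil then show ?case by (simp add: lwalk_def)
next
  case (Cons a xs)
  show ?case
  proof (cases "xs = []")
    case True
    then show ?thesis using Cons.prems
      by (intro exI[of _ "[a]"]) (auto simp: lwalk_def walk_between_def walk_def)
  next
    case False
    have lw: "lwalk V E xs" using Cons.prems False by (auto simp: lwalk_def successively_Cons)
    obtain ys where ys: "walk_between V E (hd xs) (last xs) ys" "length ys \<le> length xs"
      using Cons.IH[OF lw] by blast
    have rel: "E a (hd xs) \<or> a = hd xs" using Cons.prems False by (auto simp: lwalk_def successively_Cons)
    show ?thesis
    proof (cases "a = hd xs")
      case True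
      then show ?thesis using ys False by (intro exI[of _ ys]) auto
    next
      case nf: False
      then have "E a (hd ys)" using rel ys by (auto simp: walk_between_def)
      then show ?thesis using ys False Cons.prems
        by (intro exI[of _ "a # ys"]) (auto simp: walk_between_def walk_def lwalk_def successively_Cons)
    qed
  qed
qed

lemma walk_lwalk: "walk_between V E x y xs \<Longrightarrow> lwalk V E xs \<and> hd xs = x \<and> last xs = y"
  unfolding walk_between_def walk_def lwalk_def
  by (auto elim: successively_mono)

lemma gdist_le: "walk_between V E x y xs \<Longrightarrow> gdist V E x y \<le> length xs - 1"
  unfolding gdist_def
  by (rule Least_le) (auto simp: walk_between_def walk_def intro!: exI[of _ xs])

lemma gdist_lwalk: "lwalk V E xs \<Longrightarrow> hd xs = x \<Longrightarrow> last xs = y \<Longrightarrow> gdist V E x y \<le> length xs - 1"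
  using lwalk_to_walk gdist_le by fastforce

lemma gdist_ex:
  assumes "\<exists>xs. walk_between V E x y xs"
  shows "\<exists>xs. walk_between V E x y xs \<and> length xs = gdist V E x y + 1"
proof -
  obtain xs where xs: "walk_between V E x y xs" using assms by blast
  then have "xs \<noteq> []" by (auto simp: walk_between_def walk_def)
  then have "\<exists>n xs. walk_between V E x y xs \<and> length xs = n + 1" using xs
    by (intro exI[of _ "length xs - 1"] exI[of _ xs]) auto
  then show ?thesis unfolding gdist_def by (rule LeastI_ex)
qed

lemma succ_rep1: "P c c \<Longrightarrow> successively P (c # replicate m c)"
  by (induction m) auto

lemma succ_rep: "P c c \<Longrightarrow> successively P (replicate m c)"
  by (cases m) (auto simp: succ_rep1)

lemma lwalk_pad: "lwalk V E xs \<Longrightarrow> lwalk V E (xs @ replicate m (last xs))"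
  by (cases m) (auto simp: lwalk_def successively_append_iff succ_rep1)

lemma succ_zip:
  assumes "length xs = length ys" "successively R1 xs" "successively R2 ys"
  shows "successively (\<lambda>p q. R1 (fst p) (fst q) \<and> R2 (snd p) (snd q)) (zip xs ys)"
  using assms
proof (induction xs ys rule: list_induct2)
  case Nil then show ?case by simp
next
  case (Cons x xs y ys)
  then show ?case
    by (cases xs; cases ys) (auto simp: successively_Cons)
qed

lemma gdist_ex':
  assumes "connected_graph V E" "x \<in> V" "y \<in> V"
  shows "\<exists>xs. walk_between V E x y xs \<and> length xs = gdist V E x y + 1"
  using assms unfolding connected_graph_def by (intro gdist_ex) blast

lemma last_pad: "last (xs @ replicate k (last xs)) = last xs"
  by (cases k) auto

lemma lwalk_prod:
  assumes "lwalk V1 E1 xs" "lwalk V2 E2 ys" "length xs = length ys"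
  shows "lwalk (V1 \<times> V2) (strong_product_edges V1 V2 E1 E2) (zip xs ys)"
proof -
  have s: "successively (\<lambda>p q. (E1 (fst p) (fst q) \<or> fst p = fst q) \<and> (E2 (snd p) (snd q) \<or> snd p = snd q)) (zip xs ys)"
    using assms by (intro succ_zip) (auto simp: lwalk_def)
  have st: "set (zip xs ys) \<subseteq> V1 \<times> V2" using assms
    by (auto simp: lwalk_def dest: set_zip_leftD set_zip_rightD)
  have "successively (\<lambda>a b. strong_product_edges V1 V2 E1 E2 a b \<or> a = b) (zip xs ys)"
    by (rule successively_mono[OF s]) (use st in \<open>auto simp: strong_product_edges_def\<close>)
  then show ?thesis using st assms by (auto simp: lwalk_def)
qed

lemma lwalk_fst:
  assumes "lwalk (V1 \<times> V2) (strong_product_edges V1 V2 E1 E2) zs"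
  shows "lwalk V1 E1 (map fst zs)" "lwalk V2 E2 (map snd zs)"
  using assms unfolding lwalk_def
  by (auto simp: successively_map elim!: successively_mono simp: strong_product_edges_def)

lemma gdist_prod:
  assumes cg1: "connected_graph V1 E1" and cg2: "connected_graph V2 E2"
    and "a \<in> V1" "c \<in> V1" "b \<in> V2" "d \<in> V2"
  shows "gdist (V1 \<times> V2) (strong_product_edges V1 V2 E1 E2) (a,b) (c,d)
         = max (gdist V1 E1 a c) (gdist V2 E2 b d)"
proof -
  let ?E = "strong_product_edges V1 V2 E1 E2"
  define m where "m = max (gdist V1 E1 a c) (gdist V2 E2 b d)"
  obtain xs where xs: "walk_between V1 E1 a c xs" "length xs = gdist V1 E1 a c + 1"
    using gdist_ex'[OF cg1] assms by blast
  obtain ys where ys: "walk_between V2 E2 b d ys" "length ys = gdist V2 E2 b d + 1"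
    using gdist_ex'[OF cg2] assms by blast
  define xs' where "xs' = xs @ replicate (m - gdist V1 E1 a c) (last xs)"
  define ys' where "ys' = ys @ replicate (m - gdist V2 E2 b d) (last ys)"
  have lx: "lwalk V1 E1 xs'" "hd xs' = a" "last xs' = c" "length xs' = m + 1"
    using walk_lwalk[OF xs(1)] xs(2) lwalk_pad[of _ _ xs] unfolding xs'_def m_def
    by (auto simp: lwalk_def last_pad)
  have ly: "lwalk V2 E2 ys'" "hd ys' = b" "last ys' = d" "length ys' = m + 1"
    using walk_lwalk[OF ys(1)] ys(2) lwalk_pad[of _ _ ys] unfolding ys'_def m_def
    by (auto simp: lwalk_def last_pad)
  have lz: "lwalk (V1 \<times> V2) ?E (zip xs' ys')" using lwalk_prod[OF lx(1) ly(1)] lx(4) ly(4) by simp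
  have hz: "hd (zip xs' ys') = (a,b)" "last (zip xs' ys') = (c,d)"
  proof -
    have "xs' \<noteq> []" "ys' \<noteq> []" using lx(4) ly(4) by auto
    then show "hd (zip xs' ys') = (a,b)" "last (zip xs' ys') = (c,d)"
      using hd_zip[of xs' ys'] last_zip[of xs' ys'] lx(2,3,4) ly(2,3,4) by auto
  qed
  have le: "gdist (V1 \<times> V2) ?E (a,b) (c,d) \<le> m"
    using gdist_lwalk[OF lz hz] lx(4) ly(4) by simp
  obtain ws where ws: "walk_between (V1 \<times> V2) ?E (a,b) (c,d) ws"
    using lwalk_to_walk[OF lz] unfolding hz by blast
  obtain zs where zs: "walk_between (V1 \<times> V2) ?E (a,b) (c,d) zs"
      "length zs = gdist (V1 \<times> V2) ?E (a,b) (c,d) + 1"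
    using gdist_ex ws by meson
  have lzs: "lwalk (V1 \<times> V2) ?E zs" "hd zs = (a,b)" "last zs = (c,d)"
    using walk_lwalk[OF zs(1)] by auto
  have ne: "zs \<noteq> []" using lzs by (auto simp: lwalk_def)
  have "gdist V1 E1 a c \<le> length (map fst zs) - 1"
    by (rule gdist_lwalk[OF lwalk_fst(1)[OF lzs(1)]]) (simp_all add: hd_map last_map ne lzs(2,3))
  moreover have "gdist V2 E2 b d \<le> length (map snd zs) - 1"
    by (rule gdist_lwalk[OF lwalk_fst(2)[OF lzs(1)]]) (simp_all add: hd_map last_map ne lzs(2,3))
  ultimately have "m \<le> gdist (V1 \<times> V2) ?E (a,b) (c,d)" using zs(2) unfolding m_def by simp
  then show ?thesis using le unfolding m_def by (rule antisym[rotated])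
qed

lemma gdist_self: "x \<in> V \<Longrightarrow> gdist V E x x = 0"
  using gdist_le[of V E x x "[x]"] by (simp add: walk_between_def walk_def)

lemma gdist_zero:
  assumes "connected_graph V E" "x \<in> V" "y \<in> V" "gdist V E x y = 0"
  shows "x = y"
proof -
  obtain xs where "walk_between V E x y xs" "length xs = gdist V E x y + 1"
    using gdist_ex'[OF assms(1-3)] by blast
  then show ?thesis using assms(4) by (cases xs) (auto simp: walk_between_def)
qed

lemma interval_lt:
  assumes g: "graph V E" and e: "E a b" and i: "a \<in> interval V E b w"
  shows "gdist V E a w < gdist V E b w"
proof -
  obtain xs where xs: "walk_between V E b w xs" "length xs = gdist V E b w + 1" "a \<in> set xs"
    using i unfolding interval_def by blast
  obtain p q where pq: "xs = p @ a # q" using split_list[OF xs(3)] by blast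
  have ab: "a \<noteq> b" using g e unfolding graph_def by blast
  have pne: "p \<noteq> []" using pq xs(1) ab by (auto simp: walk_between_def)
  have "walk_between V E a w (a # q)"
    using xs(1) pq unfolding walk_between_def walk_def
    by (auto simp: successively_append_iff)
  then have "gdist V E a w \<le> length q" using gdist_le by fastforce
  moreover have "length q < gdist V E b w" using xs(2) pq pne by (cases p) auto
  ultimately show ?thesis by simp
qed

lemma le_diam:
  assumes "finite V" "x \<in> V" "y \<in> V"
  shows "gdist V E x y \<le> diam V E"
  unfolding diam_def
  by (rule Max_ge) (use assms in \<open>auto intro: finite_image_set2\<close>)

lemma sep:
  assumes cg1: "connected_graph V1 E1" and cg2: "connected_graph V2 E2"
    and e: "E2 a b" and k: "gdist V2 E2 b w \<ge> k" and i: "a \<in> interval V2 E2 b w"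
    and w: "w \<in> V2" and dm: "diam V1 E1 < k"
    and "ua \<in> V1" "ub \<in> V1" "x \<in> V1"
  shows "gdist (V1 \<times> V2) (strong_product_edges V1 V2 E1 E2) (ua,a) (x,w)
       < gdist (V1 \<times> V2) (strong_product_edges V1 V2 E1 E2) (ub,b) (x,w)"
proof -
  have g1: "graph V1 E1" and g2: "graph V2 E2" using cg1 cg2 by (auto simp: connected_graph_def)
  have ab: "a \<in> V2" "b \<in> V2" using g2 e unfolding graph_def by blast+
  have lt: "gdist V2 E2 a w < gdist V2 E2 b w" using interval_lt[OF g2 e i] .
  have d1: "gdist V1 E1 ua x < k" "gdist V1 E1 ub x < k"
    using le_diam[of V1 ua x E1] le_diam[of V1 ub x E1] g1 assms dm by (auto simp: graph_def)
  show ?thesis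
    using gdist_prod[OF cg1 cg2, of ua x a w] gdist_prod[OF cg1 cg2, of ub x b w] assms ab lt d1 k
    by auto
qed

lemma exists_edge:
  assumes cg: "connected_graph V E" and c: "card V \<ge> 2"
  shows "\<exists>u v. E u v"
proof -
  have fin: "finite V" using cg by (auto simp: connected_graph_def graph_def)
  have "\<not> card V \<le> Suc 0" using c by simp
  then obtain a b where ab: "a \<in> V" "b \<in> V" "a \<noteq> b" using card_le_Suc0_iff_eq[OF fin] by blast
  obtain xs where xs: "walk_between V E a b xs" using cg ab unfolding connected_graph_def by blast
  then obtain y ys where "xs = a # y # ys" using ab(3)
    by (cases xs; cases "tl xs") (auto simp: walk_between_def walk_def)
  then have "E a y" using xs by (auto simp: walk_between_def walk_def)
  then show ?thesis by blast
qed

lemma sum_ge_image: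
  assumes fin: "finite V1" "finite V2" and A: "A \<subseteq> V1" and v: "v \<in> V2"
    and R: "R \<subseteq> V1 \<times> V2" and inc: "\<forall>x\<in>A. (x, v) \<in> R"
    and nn: "\<forall>x\<in>V1. 0 \<le> (f x :: real)"
  shows "(\<Sum>p\<in>R. f (fst p)) \<ge> (\<Sum>x\<in>A. f x)"
proof -
  have "(\<Sum>x\<in>A. f x) = (\<Sum>p\<in>(\<lambda>x. (x, v)) ` A. f (fst p))"
    by (subst sum.reindex) (auto simp: inj_on_def)
  also have "\<dots> \<le> (\<Sum>p\<in>R. f (fst p))"
    by (rule sum_mono2) (use fin R inc nn in \<open>auto intro: finite_subset\<close>)
  finally show ?thesis .
qed

lemma key:
  assumes "k > 0"
    and cg1: "connected_graph V1 E1" and c2: "card V1 \<ge> 2" and dm: "diam V1 E1 < k"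
    and cg2: "connected_graph V2 E2" and ak: "adjacency_k_resolved k V2 E2"
    and f: "local_resolving_function V1 E1 f"
  shows "local_resolving_function (V1 \<times> V2) (strong_product_edges V1 V2 E1 E2) (\<lambda>p. f (fst p))"
proof -
  let ?E = "strong_product_edges V1 V2 E1 E2"
  have g1: "graph V1 E1" and g2: "graph V2 E2" using cg1 cg2 by (auto simp: connected_graph_def)
  have fin: "finite V1" "finite V2" using g1 g2 by (auto simp: graph_def)
  have nn: "\<forall>x\<in>V1. 0 \<le> f x" and le1: "\<forall>x\<in>V1. f x \<le> 1"
    using f by (auto simp: local_resolving_function_def)
  have fe: "\<And>u v. E1 u v \<Longrightarrow> (\<Sum>x\<in>resolving_set_edge V1 E1 u v. f x) \<ge> 1"
    using f by (auto simp: local_resolving_function_def)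
  have allV1: "(\<Sum>x\<in>V1. f x) \<ge> 1"
  proof -
    obtain u v where uv: "E1 u v" using exists_edge[OF cg1 c2] by blast
    have "(\<Sum>x\<in>resolving_set_edge V1 E1 u v. f x) \<le> (\<Sum>x\<in>V1. f x)"
      by (rule sum_mono2) (use fin nn in \<open>auto simp: resolving_set_edge_def\<close>)
    then show ?thesis using fe[OF uv] by simp
  qed
  have edge: "(\<Sum>x\<in>resolving_set_edge (V1 \<times> V2) ?E p q. f (fst x)) \<ge> 1" if pq: "?E p q" for p q
  proof -
    obtain u1 v1 u2 v2 where p: "p = (u1, v1)" and q: "q = (u2, v2)" by (cases p; cases q) auto
    have inV: "u1 \<in> V1" "u2 \<in> V1" "v1 \<in> V2" "v2 \<in> V2" "p \<noteq> q"
      using pq p q by (auto simp: strong_product_edges_def)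
    have R: "resolving_set_edge (V1 \<times> V2) ?E p q \<subseteq> V1 \<times> V2"
      by (auto simp: resolving_set_edge_def)
    have "\<exists>A v. A \<subseteq> V1 \<and> v \<in> V2 \<and> (\<Sum>x\<in>A. f x) \<ge> 1 \<and>
            (\<forall>x\<in>A. (x, v) \<in> resolving_set_edge (V1 \<times> V2) ?E p q)"
    proof (cases "v1 = v2")
      case True
      then have e1: "E1 u1 u2" using pq p q by (auto simp: strong_product_edges_def)
      have "\<forall>x\<in>resolving_set_edge V1 E1 u1 u2. (x, v1) \<in> resolving_set_edge (V1 \<times> V2) ?E p q"
      proof
        fix x assume x: "x \<in> resolving_set_edge V1 E1 u1 u2"
        then have xV: "x \<in> V1" and ne: "gdist V1 E1 u1 x \<noteq> gdist V1 E1 u2 x"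
          by (auto simp: resolving_set_edge_def)
        show "(x, v1) \<in> resolving_set_edge (V1 \<times> V2) ?E p q"
          using gdist_prod[OF cg1 cg2, of u1 x v1 v1] gdist_prod[OF cg1 cg2, of u2 x v1 v1]
            gdist_self[of v1 V2 E2] inV xV ne True p q
          by (auto simp: resolving_set_edge_def)
      qed
      then show ?thesis using fe[OF e1] inV
        by (intro exI[of _ "resolving_set_edge V1 E1 u1 u2"] exI[of _ v1])
           (auto simp: resolving_set_edge_def)
    next
      case False
      then have e2: "E2 v1 v2" using pq p q by (auto simp: strong_product_edges_def)
      then have e2': "E2 v2 v1" using g2 by (auto simp: graph_def)
      obtain w where w: "w \<in> V2" and
        ww: "(gdist V2 E2 v2 w \<ge> k \<and> v1 \<in> interval V2 E2 v2 w) \<or>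
             (gdist V2 E2 v1 w \<ge> k \<and> v2 \<in> interval V2 E2 v1 w)"
        using ak e2 unfolding adjacency_k_resolved_def by blast
      have "\<forall>x\<in>V1. (x, w) \<in> resolving_set_edge (V1 \<times> V2) ?E p q"
      proof
        fix x assume xV: "x \<in> V1"
        have "gdist (V1 \<times> V2) ?E (u1,v1) (x,w) \<noteq> gdist (V1 \<times> V2) ?E (u2,v2) (x,w)"
          using ww
        proof
          assume h: "gdist V2 E2 v2 w \<ge> k \<and> v1 \<in> interval V2 E2 v2 w"
          show ?thesis using sep[OF cg1 cg2 e2 _ _ w dm inV(1) inV(2) xV] h by fastforce
        next
          assume h: "gdist V2 E2 v1 w \<ge> k \<and> v2 \<in> interval V2 E2 v1 w"
          show ?thesis using sep[OF cg1 cg2 e2' _ _ w dm inV(2) inV(1) xV] h by fastforce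
        qed
        then show "(x, w) \<in> resolving_set_edge (V1 \<times> V2) ?E p q"
          using p q xV w by (auto simp: resolving_set_edge_def)
      qed
      then show ?thesis using allV1 w by (intro exI[of _ V1] exI[of _ w]) auto
    qed
    then obtain A v where Av: "A \<subseteq> V1" "v \<in> V2" "(\<Sum>x\<in>A. f x) \<ge> 1"
        "\<forall>x\<in>A. (x, v) \<in> resolving_set_edge (V1 \<times> V2) ?E p q" by blast
    show ?thesis using sum_ge_image[OF fin Av(1,2) R Av(4) nn] Av(3) by linarith
  qed
  show ?thesis unfolding local_resolving_function_def
    using nn le1 edge by auto
qed

theorem theorem3p4:
  fixes V1 :: "'a set" and E1 :: "'a \<Rightarrow> 'a \<Rightarrow> bool"
    and V2 :: "'b set" and E2 :: "'b \<Rightarrow> 'b \<Rightarrow> bool"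
    and k n2 :: nat
  assumes "k > 0"
    and "connected_graph V1 E1" and "card V1 \<ge> 2" and "diam V1 E1 < k"
    and "connected_graph V2 E2" and "adjacency_k_resolved k V2 E2" and "card V2 = n2"
  shows "ldim_f (V1 \<times> V2) (strong_product_edges V1 V2 E1 E2) \<le> real n2 * ldim_f V1 E1"
proof -
  let ?E = "strong_product_edges V1 V2 E1 E2"
  let ?P = "{(\<Sum>v\<in>V1 \<times> V2. g v) | g. local_resolving_function (V1 \<times> V2) ?E g}"
  let ?S = "{(\<Sum>v\<in>V1. f v) | f. local_resolving_function V1 E1 f}"
  have g1: "graph V1 E1" and g2: "graph V2 E2" using assms by (auto simp: connected_graph_def)
  have fin: "finite V1" "finite V2" using g1 g2 by (auto simp: graph_def)
  have n2: "n2 > 0" using assms(7) fin(2) g2 by (auto simp: graph_def card_gt_0_iff)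
  have bdd: "bdd_below ?P"
    by (rule bdd_belowI[of _ 0]) (auto simp: local_resolving_function_def intro!: sum_nonneg)
  have up: "Inf ?P \<le> real n2 * (\<Sum>v\<in>V1. f v)" if f: "local_resolving_function V1 E1 f" for f
  proof -
    have l: "local_resolving_function (V1 \<times> V2) ?E (\<lambda>p. f (fst p))"
      using key[OF assms(1-6) f] .
    have "(\<Sum>p\<in>V1 \<times> V2. f (fst p)) = (\<Sum>x\<in>V1. \<Sum>y\<in>V2. f x)"
      by (subst sum.cartesian_product) (simp add: case_prod_beta)
    also have "\<dots> = real n2 * (\<Sum>v\<in>V1. f v)" using assms(7) by (simp add: sum_distrib_left)
    finally have "real n2 * (\<Sum>v\<in>V1. f v) \<in> ?P" using l by (metis (mono_tags, lifting) mem_Collect_eq)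
    then show ?thesis by (rule cInf_lower[OF _ bdd])
  qed
  have one: "local_resolving_function V1 E1 (\<lambda>_. 1)"
    unfolding local_resolving_function_def
  proof (intro conjI allI impI)
    fix u v assume e: "E1 u v"
    have uv: "u \<in> V1" "v \<in> V1" "u \<noteq> v" using g1 e by (auto simp: graph_def)
    have "gdist V1 E1 v u \<noteq> 0" using gdist_zero[OF assms(2) uv(2) uv(1)] uv(3) by auto
    then have "u \<in> resolving_set_edge V1 E1 u v"
      using gdist_self[OF uv(1), of E1] uv by (auto simp: resolving_set_edge_def)
    moreover have "finite (resolving_set_edge V1 E1 u v)"
      using fin by (auto simp: resolving_set_edge_def)
    ultimately have "card (resolving_set_edge V1 E1 u v) \<ge> 1"
      by (metis One_nat_def Suc_leI card_gt_0_iff empty_iff)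
    then show "(\<Sum>x\<in>resolving_set_edge V1 E1 u v. 1) \<ge> (1::real)" by simp
  qed auto
  have ne: "?S \<noteq> {}" using one by blast
  have "Inf ?P / real n2 \<le> Inf ?S"
  proof (rule cInf_greatest[OF ne])
    fix s assume "s \<in> ?S"
    then obtain f where f: "local_resolving_function V1 E1 f" "s = (\<Sum>v\<in>V1. f v)" by blast
    show "Inf ?P / real n2 \<le> s" using up[OF f(1)] f(2) n2 by (simp add: field_simps)
  qed
  then have "Inf ?P \<le> real n2 * Inf ?S" using n2 by (simp add: field_simps)
  then show ?thesis unfolding ldim_f_def .
qed

end
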